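(* Let $V\neq\{0\}$ be a vector space over a field $F$ and let $T:V\to V$ have a vanishing polynomial, with minimal polynomial $p$. (1) If $T$ is nilpotent and is $\gamma$-homogeneous or absolutely $\gamma$-homogeneous, then $0$ is the only eigenvalue of $T$ (and it is the only root of $p$). (2) If $T$ is not nilpotent and $F$ is infinite, then for $\gamma\notin\{0,1\}$, $T$ is neither $\gamma$-homogeneous, nor absolutely $\gamma$-homogeneous, nor positively $\gamma$-homogeneous. (3) If $T$ is $1$-homogeneous and $|F|>2$, then $p(\lambda)=0$ for every eigenvalue $\lambda$ of $T$. If $T$ is absolutely $1$-homogeneous, then $p(0)=0$ and $p(|\lambda|)=0$ for every eigenvalue $\lambda$ of $T$. (4) Let $T$ be $0$-homogeneous, absolutely $0$-homogeneous, or positively $0$-homogeneous. If $p(1)\neq0$, then the only possible eigenvalue of $T$ is $0$ (in the positively homogeneous case: the only possible nonnegative eigenvalue is $0$). Moreover $p(0)=0$, except possibly in the case of (plain) $0$-homogeneity with $|F|=2$.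
   Context: $T^0=I$, $T^i=T\circ T^{i-1}$; $p(T)(v)=\sum a_iT^i(v)$. A vanishing polynomial of $T$ is a nonzero $p\in F[x]$ with $p(T)(v)=0$ for all $v$; the minimal polynomial is the unique monic one of least degree. $T$ is nilpotent if $T^m=0$ for some $m$. A vector $0\neq v$ is an eigenvector with eigenvalue $\lambda\in F$ if $T(v)=\lambda v$. For $\gamma\in\mathbb{N}$, $T$ is $\gamma$-homogeneous if $T(av)=a^\gamma T(v)$ for all $0\neq a\in F$, $v\in V$. For $F=\mathbb{R}$ or $\mathbb{C}$ and $\gamma\ge0$ real, $T$ is absolutely $\gamma$-homogeneous if $T(av)=|a|^\gamma T(v)$ for all $a\neq0$, $v\in V$. For $F=\mathbb{R}$ and $\gamma\ge0$, $T$ is positively $\gamma$-homogeneous if $T(av)=a^\gamma T(v)$ for all $a>0$, $v\in V$. *)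

theory Defs
  imports Main "HOL-Computational_Algebra.Polynomial"
begin

text \<open>A vector space V over F is modelled by a type 'v with a scalar multiplication
  s satisfying the library locale vector_space; V is the whole type. T is an
  arbitrary (not necessarily linear) map.\<close>

definition poly_app :: "('f::field \<Rightarrow> 'v::ab_group_add \<Rightarrow> 'v) \<Rightarrow> 'f poly \<Rightarrow> ('v \<Rightarrow> 'v) \<Rightarrow> 'v \<Rightarrow> 'v" where
  "poly_app s p T v = (\<Sum>i\<le>degree p. s (coeff p i) ((T ^^ i) v))"

definition vanishing_poly :: "('f::field \<Rightarrow> 'v::ab_group_add \<Rightarrow> 'v) \<Rightarrow> 'f poly \<Rightarrow> ('v \<Rightarrow> 'v) \<Rightarrow> bool" where
  "vanishing_poly s p T \<longleftrightarrow> p \<noteq> 0 \<and> (\<forall>v. poly_app s p T v = 0)"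

definition minimal_poly :: "('f::field \<Rightarrow> 'v::ab_group_add \<Rightarrow> 'v) \<Rightarrow> 'f poly \<Rightarrow> ('v \<Rightarrow> 'v) \<Rightarrow> bool" where
  "minimal_poly s p T \<longleftrightarrow> vanishing_poly s p T \<and> lead_coeff p = 1 \<and>
     (\<forall>q. vanishing_poly s q T \<longrightarrow> degree p \<le> degree q)"

definition nilpotent_map :: "('v::zero \<Rightarrow> 'v) \<Rightarrow> bool" where
  "nilpotent_map T \<longleftrightarrow> (\<exists>m. T ^^ m = (\<lambda>_. 0))"

definition is_eigenvalue :: "('f \<Rightarrow> 'v::zero \<Rightarrow> 'v) \<Rightarrow> ('v \<Rightarrow> 'v) \<Rightarrow> 'f \<Rightarrow> bool" where
  "is_eigenvalue s T c \<longleftrightarrow> (\<exists>v. v \<noteq> 0 \<and> T v = s c v)"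

definition homogeneous :: "('f::field \<Rightarrow> 'v \<Rightarrow> 'v) \<Rightarrow> nat \<Rightarrow> ('v \<Rightarrow> 'v) \<Rightarrow> bool" where
  "homogeneous s \<gamma> T \<longleftrightarrow> (\<forall>a v. a \<noteq> 0 \<longrightarrow> T (s a v) = s (a ^ \<gamma>) (T v))"

text \<open>F = R or C: modelled by the class real_normed_field (whose instances are,
  up to isomorphism, exactly R and C); |a| is the norm, viewed back in F.\<close>
definition abs_homogeneous :: "('f::real_normed_field \<Rightarrow> 'v \<Rightarrow> 'v) \<Rightarrow> real \<Rightarrow> ('v \<Rightarrow> 'v) \<Rightarrow> bool" where
  "abs_homogeneous s \<gamma> T \<longleftrightarrow> (\<forall>a v. a \<noteq> 0 \<longrightarrow> T (s a v) = s (of_real (norm a powr \<gamma>)) (T v))"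

definition pos_homogeneous :: "(real \<Rightarrow> 'v \<Rightarrow> 'v) \<Rightarrow> real \<Rightarrow> ('v \<Rightarrow> 'v) \<Rightarrow> bool" where
  "pos_homogeneous s \<gamma> T \<longleftrightarrow> (\<forall>a v. a > 0 \<longrightarrow> T (s a v) = s (a powr \<gamma>) (T v))"

definition setting :: "('f::field \<Rightarrow> 'v::ab_group_add \<Rightarrow> 'v) \<Rightarrow> ('v \<Rightarrow> 'v) \<Rightarrow> 'f poly \<Rightarrow> bool" where
  "setting s T p \<longleftrightarrow> vector_space s \<and> (\<exists>v::'v. v \<noteq> 0) \<and>
     (\<exists>q. vanishing_poly s q T) \<and> minimal_poly s p T"

end

theory Submission
  imports Defs
begin


context vector_space begin

lemma PA_bound:
  assumes "degree p \<le> n"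
  shows "poly_app scale p T v = (\<Sum>i\<le>n. scale (coeff p i) ((T ^^ i) v))"
  unfolding poly_app_def
  by (rule sum.mono_neutral_left) (use assms in \<open>auto simp: coeff_eq_0\<close>)

lemma PA_eigen:
  assumes "\<And>i. (T ^^ i) w = scale (r ^ i) w"
  shows "poly_app scale p T w = scale (poly p r) w"
  unfolding poly_app_def poly_altdef assms
  by (simp add: scale_sum_left)

lemma PA_const:
  assumes "\<And>i. i \<ge> 1 \<Longrightarrow> (T ^^ i) u = (T ^^ i) w"
  shows "poly_app scale p T u - poly_app scale p T w = scale (coeff p 0) (u - w)"
proof -
  have "poly_app scale p T u - poly_app scale p T w =
     (\<Sum>i\<le>degree p. scale (coeff p i) ((T ^^ i) u) - scale (coeff p i) ((T ^^ i) w))"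
    unfolding poly_app_def by (simp add: sum_subtractf)
  also have "\<dots> = (\<Sum>i\<in>{0}. scale (coeff p i) ((T ^^ i) u) - scale (coeff p i) ((T ^^ i) w))"
    by (rule sum.mono_neutral_right) (auto simp: assms)
  finally show ?thesis by (simp add: scale_right_diff_distrib)
qed

lemma exists_coeff_poly:
  fixes c :: "nat \<Rightarrow> 'a"
  shows "\<exists>q. (\<forall>i. coeff q i = (if i \<le> n then c i else 0)) \<and> degree q \<le> n"
proof -
  define q where "q = (\<Sum>i\<le>n. monom (c i) i)"
  have cq: "coeff q j = (if j \<le> n then c j else 0)" for j
    unfolding q_def coeff_sum coeff_monom
    by (cases "j \<le> n") (auto intro: sum.neutral)
  hence "degree q \<le> n" by (intro degree_le) auto
  with cq show ?thesis by blast
qed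

lemma minimal_coeffs:
  assumes mp: "minimal_poly scale p T"
    and van: "\<And>v. (\<Sum>i\<le>degree p. scale (c i) ((T ^^ i) v)) = 0"
    and cd: "c (degree p) = 0"
  shows "\<forall>i\<le>degree p. c i = 0"
proof -
  obtain q where cq: "\<And>i. coeff q i = (if i \<le> degree p then c i else 0)" and dq: "degree q \<le> degree p"
    using exists_coeff_poly by blast
  show ?thesis
  proof (cases "q = 0")
    case True
    then show ?thesis using cq by (metis coeff_0)
  next
    case False
    have "poly_app scale q T v = 0" for v
      using PA_bound[OF dq] cq van by simp
    hence "vanishing_poly scale q T" using False by (simp add: vanishing_poly_def)
    hence "degree p \<le> degree q" using mp by (simp add: minimal_poly_def)
    hence "degree q = degree p" using dq by simp
    hence "lead_coeff q = 0" using cq cd by simp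
    with False show ?thesis by simp
  qed
qed

lemma nilpotent_from_weights:
  fixes w :: "nat \<Rightarrow> 'a"
  assumes mp: "minimal_poly scale p T"
    and wd: "\<And>i. i < degree p \<Longrightarrow> w i \<noteq> w (degree p)"
    and g: "\<And>v i. (T ^^ i) (g v) = scale (w i) ((T ^^ i) v)"
  shows "nilpotent_map T"
proof -
  let ?d = "degree p"
  have pv: "poly_app scale p T v = 0" for v using mp by (simp add: minimal_poly_def vanishing_poly_def)
  have "(\<Sum>i\<le>?d. scale (coeff p i * (w i - w ?d)) ((T ^^ i) v)) = 0" for v
  proof -
    have "(\<Sum>i\<le>?d. scale (coeff p i * (w i - w ?d)) ((T ^^ i) v)) =
      (\<Sum>i\<le>?d. scale (coeff p i) ((T ^^ i) (g v))) - scale (w ?d) (\<Sum>i\<le>?d. scale (coeff p i) ((T ^^ i) v))"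
      by (simp add: g scale_sum_right sum_subtractf algebra_simps mult.commute)
    also have "\<dots> = 0" using pv[of v] pv[of "g v"] by (simp add: poly_app_def)
    finally show ?thesis .
  qed
  from minimal_coeffs[OF mp this] have "\<forall>i\<le>?d. coeff p i * (w i - w ?d) = 0" by simp
  hence c0: "coeff p i = 0" if "i < ?d" for i using wd[OF that] that by (metis less_imp_le mult_eq_0_iff right_minus_eq)
  have lc: "coeff p ?d = 1" using mp by (simp add: minimal_poly_def)
  have "(T ^^ ?d) v = 0" for v
  proof -
    have "poly_app scale p T v = (\<Sum>i\<in>{?d}. scale (coeff p i) ((T ^^ i) v))"
      unfolding poly_app_def by (rule sum.mono_neutral_right) (auto simp: c0)
    then show ?thesis using pv[of v] lc by simp
  qed
  thus ?thesis unfolding nilpotent_map_def by blast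
qed


lemma van_p: "minimal_poly scale p T \<Longrightarrow> poly_app scale p T v = 0"
  by (simp add: minimal_poly_def vanishing_poly_def)

lemma nil_T0: fixes T :: "'b \<Rightarrow> 'b" assumes "nilpotent_map T" shows "T 0 = 0"
proof -
  obtain m where m: "T ^^ m = (\<lambda>_. 0)" using assms unfolding nilpotent_map_def by blast
  have "T 0 = T ((T ^^ m) 0)" by (simp add: m)
  also have "\<dots> = (T ^^ m) (T 0)" by (rule funpow_swap1)
  finally show ?thesis by (simp add: m)
qed

lemma funpow_fix0: fixes T :: "'b \<Rightarrow> 'b" shows "T 0 = 0 \<Longrightarrow> (T ^^ i) 0 = 0"
  by (induct i) auto

lemma nil_kernel: fixes T :: "'b \<Rightarrow> 'b" and v :: 'b assumes "nilpotent_map T" "v \<noteq> 0" shows "\<exists>w. w \<noteq> 0 \<and> T w = 0"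
proof -
  obtain m where m: "T ^^ m = (\<lambda>_. 0)" using assms unfolding nilpotent_map_def by blast
  define k where "k = (LEAST k. (T ^^ k) v = 0)"
  have k: "(T ^^ k) v = 0" unfolding k_def by (rule LeastI[of _ m]) (simp add: m)
  have k0: "k \<noteq> 0" using k assms(2) by (intro notI) simp
  have "(T ^^ (k - 1)) v \<noteq> 0" unfolding k_def by (rule not_less_Least) (use k0 in \<open>simp add: k_def\<close>)
  moreover have "T ((T ^^ (k - 1)) v) = 0" using k k0
    by (metis Suc_pred' bot_nat_0.not_eq_extremum comp_apply funpow.simps(2))
  ultimately show ?thesis by blast
qed

lemma nil_p0:
  assumes mp: "minimal_poly scale p T" and nil: "nilpotent_map T" and v: "(v::'b) \<noteq> 0"
  shows "poly p 0 = 0"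
proof -
  obtain w where w: "w \<noteq> 0" "T w = 0" using nil_kernel[OF nil v] by blast
  have T0: "T 0 = 0" using nil_T0[OF nil] .
  have "(T ^^ i) w = (T ^^ i) 0" if i1: "i \<ge> 1" for i
  proof -
    obtain j where "i = Suc j" using i1 by (cases i) auto
    thus ?thesis by (simp add: funpow_Suc_right w T0 funpow_fix0[of T, OF T0] del: funpow.simps)
  qed
  from PA_const[of T w 0 p, OF this] have "scale (coeff p 0) w = 0" by (simp add: van_p[OF mp])
  with w show ?thesis by (simp add: poly_0_coeff_0)
qed

lemma nil_roots:
  assumes mp: "minimal_poly scale p T" and nil: "nilpotent_map T" and pc: "poly p c = 0" and c: "c \<noteq> 0"
  shows False
proof -
  obtain m where m: "T ^^ m = (\<lambda>_. 0)" using nil unfolding nilpotent_map_def by blast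
  have T0: "T 0 = 0" using nil_T0[OF nil] .
  have p0: "p \<noteq> 0" using mp by (auto simp: minimal_poly_def vanishing_poly_def)
  obtain q where pq: "p = [:-c,1:] * q" using pc by (metis dvdE poly_eq_0_iff_dvd)
  have q0: "q \<noteq> 0" using p0 pq by auto
  have dp: "degree p = Suc (degree q)" unfolding pq by (subst degree_mult_eq) (use q0 in auto)
  have cp: "coeff p i = coeff (pCons 0 q) i - c * coeff q i" for i
    unfolding pq by (simp add: mult_pCons_left)
  define u where "u = poly_app scale q T"
  have uT: "u (T v) = scale c (u v)" for v
  proof -
    have "0 = poly_app scale p T v" using van_p[OF mp] by simp
    also have "\<dots> = (\<Sum>i\<le>Suc (degree q). scale (coeff (pCons 0 q) i) ((T ^^ i) v))
       - scale c (\<Sum>i\<le>Suc (degree q). scale (coeff q i) ((T ^^ i) v))"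
      unfolding poly_app_def dp cp by (simp add: scale_left_diff_distrib sum_subtractf scale_sum_right del: sum.atMost_Suc)
    also have "(\<Sum>i\<le>Suc (degree q). scale (coeff (pCons 0 q) i) ((T ^^ i) v)) = u (T v)"
      unfolding u_def poly_app_def sum.atMost_Suc_shift by (simp add: funpow_Suc_right del: funpow.simps)
    also have "(\<Sum>i\<le>Suc (degree q). scale (coeff q i) ((T ^^ i) v)) = u v"
      unfolding u_def by (rule PA_bound[symmetric]) simp
    finally show ?thesis by simp
  qed
  have uk: "u ((T ^^ k) v) = scale (c ^ k) (u v)" for k v
    by (induct k) (simp_all add: uT)
  have u0: "u 0 = 0" unfolding u_def poly_app_def by (simp add: funpow_fix0[of T, OF T0])
  have "u v = 0" for v using uk[of m v] u0 c by (simp add: m)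
  hence "vanishing_poly scale q T" using q0 unfolding u_def vanishing_poly_def by auto
  hence "degree p \<le> degree q" using mp by (simp add: minimal_poly_def)
  with dp show False by simp
qed

lemma nil_eig:
  assumes nil: "nilpotent_map T"
    and H: "\<And>b v. b \<noteq> 0 \<Longrightarrow> \<exists>b'. b' \<noteq> 0 \<and> T (scale b v) = scale b' (T v)"
    and ev: "is_eigenvalue scale T c"
  shows "c = 0"
proof (rule ccontr)
  assume c: "c \<noteq> 0"
  obtain v where v: "v \<noteq> 0" "T v = scale c v" using ev unfolding is_eigenvalue_def by blast
  obtain m where m: "T ^^ m = (\<lambda>_. 0)" using nil unfolding nilpotent_map_def by blast
  have "\<exists>b. b \<noteq> 0 \<and> (T ^^ i) v = scale b v" for i
  proof (induct i)
    case 0 show ?case by (intro exI[of _ 1]) simp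
  next
    case (Suc i)
    then obtain b where b: "b \<noteq> 0" "(T ^^ i) v = scale b v" by blast
    obtain b' where b': "b' \<noteq> 0" "T (scale b v) = scale b' (T v)" using H[OF b(1)] by blast
    show ?case using b b' c v by (intro exI[of _ "b' * c"]) simp
  qed
  then obtain b where "b \<noteq> 0" "(T ^^ m) v = scale b v" by blast
  with m v show False by simp
qed

lemma nil_all:
  assumes mp: "minimal_poly scale p T" and nil: "nilpotent_map T" and v: "(v::'b) \<noteq> 0"
    and H: "\<And>b v. b \<noteq> 0 \<Longrightarrow> \<exists>b'. b' \<noteq> 0 \<and> T (scale b v) = scale b' (T v)"
  shows "(\<forall>c. is_eigenvalue scale T c \<longleftrightarrow> c = 0) \<and> (\<forall>x. poly p x = 0 \<longleftrightarrow> x = 0)"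
proof -
  have "is_eigenvalue scale T 0" using nil_kernel[OF nil v] unfolding is_eigenvalue_def by auto
  thus ?thesis using nil_eig[OF nil H] nil_p0[OF mp nil v] nil_roots[OF mp nil] by blast
qed


lemma hom_iter:
  assumes h: "homogeneous scale \<gamma> T" and a: "a \<noteq> 0"
  shows "(T ^^ i) (scale a v) = scale (a ^ (\<gamma> ^ i)) ((T ^^ i) v)"
proof (induct i)
  case 0 then show ?case by simp
next
  case (Suc i)
  have "a ^ (\<gamma> ^ i) \<noteq> 0" using a by simp
  then show ?case using Suc h unfolding homogeneous_def
    by (simp add: power_mult[symmetric] mult.commute)
qed

lemma part2_nat:
  assumes mp: "minimal_poly scale p T" and inf: "infinite (UNIV :: 'a set)"
    and g: "\<gamma> \<notin> {0, 1}" and h: "homogeneous scale \<gamma> T"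
  shows "nilpotent_map T"
proof -
  let ?d = "degree p"
  define B where "B = insert 0 (\<Union>i<?d. {x::'a. poly (monom 1 (\<gamma> ^ ?d) - monom 1 (\<gamma> ^ i)) x = 0})"
  have g2: "\<gamma> > 1" using g by auto
  have ne: "monom (1::'a) (\<gamma> ^ ?d) - monom 1 (\<gamma> ^ i) \<noteq> 0" if "i < ?d" for i
  proof
    assume "monom (1::'a) (\<gamma> ^ ?d) - monom 1 (\<gamma> ^ i) = 0"
    hence "coeff (monom (1::'a) (\<gamma> ^ ?d) - monom 1 (\<gamma> ^ i)) (\<gamma> ^ ?d) = 0" by simp
    moreover have "\<gamma> ^ i \<noteq> \<gamma> ^ ?d" using g2 that by simp
    ultimately show False by (simp add: coeff_monom)
  qed
  have fin: "finite {x::'a. poly (monom 1 (\<gamma> ^ ?d) - monom 1 (\<gamma> ^ i)) x = 0}" if "i < ?d" for i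
    using poly_roots_finite[OF ne[OF that]] .
  have "finite B" unfolding B_def
    by (rule finite_insert[THEN iffD2], rule finite_UN_I) (simp, rule fin, simp)
  then obtain a where a: "a \<notin> B" using inf by (metis UNIV_I finite_subset subsetI)
  have a0: "a \<noteq> 0" using a by (simp add: B_def)
  have wd: "a ^ (\<gamma> ^ i) \<noteq> a ^ (\<gamma> ^ ?d)" if "i < ?d" for i
    using a that by (auto simp: B_def poly_monom) (metis lessThan_iff)
  show ?thesis
    by (rule nilpotent_from_weights[OF mp, of "\<lambda>i. a ^ (\<gamma> ^ i)" "\<lambda>v. scale a v"])
       (use wd hom_iter[OF h a0] in auto)
qed

lemma eig_iter:
  assumes T0: "T 0 = 0" and Tw: "T w = scale r w"
    and H: "\<And>i. r ^ i \<noteq> 0 \<Longrightarrow> T (scale (r ^ i) w) = scale (r ^ i) (T w)"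
  shows "(T ^^ i) w = scale (r ^ i) w"
proof (induct i)
  case 0 then show ?case by simp
next
  case (Suc i)
  show ?case
  proof (cases "r ^ i = 0")
    case True
    then show ?thesis using Suc T0 by (auto simp: zero_power)
  next
    case False
    then show ?thesis using Suc H[OF False] Tw by (simp add: mult.commute)
  qed
qed

lemma eig_root:
  assumes mp: "minimal_poly scale p T" and w: "w \<noteq> 0" and it: "\<And>i. (T ^^ i) w = scale (r ^ i) w"
  shows "poly p r = 0"
  using PA_eigen[of T w r p, OF it] van_p[OF mp] w by simp

lemma const_root:
  assumes mp: "minimal_poly scale p T" and ne: "u \<noteq> w" and Tuw: "T u = T w"
  shows "poly p 0 = 0"
proof -
  have "(T ^^ i) u = (T ^^ i) w" if i1: "i \<ge> 1" for i
  proof -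
    obtain j where "i = Suc j" using i1 by (cases i) auto
    thus ?thesis by (simp add: funpow_Suc_right Tuw del: funpow.simps)
  qed
  from PA_const[of T u w p, OF this] have "scale (coeff p 0) (u - w) = 0" by (simp add: van_p[OF mp])
  with ne show ?thesis by (simp add: poly_0_coeff_0)
qed

lemma hom0_eig:
  assumes mp: "minimal_poly scale p T" and c: "c \<noteq> 0" and v: "v \<noteq> 0" and Tv: "T v = scale c v"
    and H: "T (scale c v) = T v"
  shows "poly p 1 = 0"
proof -
  have "(T ^^ i) (scale c v) = scale (1 ^ i) (scale c v)" for i
    by (induct i) (simp_all add: H Tv)
  from eig_root[OF mp _ this] c v show ?thesis by simp
qed

end

lemma setting_D: fixes s :: "'f::field \<Rightarrow> 'v::ab_group_add \<Rightarrow> 'v" shows "setting s T p \<Longrightarrow> vector_space s \<and> (\<exists>v::'v. v \<noteq> 0) \<and> minimal_poly s p T"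
  by (simp add: setting_def)

lemma part1a:
  fixes s :: "'f::field \<Rightarrow> 'v::ab_group_add \<Rightarrow> 'v"
  assumes "setting s T p" "nilpotent_map T" "homogeneous s \<gamma> T"
  shows "(\<forall>c. is_eigenvalue s T c \<longleftrightarrow> c = 0) \<and> (\<forall>x. poly p x = 0 \<longleftrightarrow> x = 0)"
proof -
  note sd = setting_D[OF assms(1)]
  from sd have vs: "vector_space s" by (rule conjunct1)
  from sd have mp: "minimal_poly s p T" by simp
  from sd obtain v :: 'v where v: "v \<noteq> 0" by auto
  show ?thesis
  proof (rule vector_space.nil_all[OF vs mp assms(2) v])
    fix b :: 'f and u assume b: "b \<noteq> 0"
    have "b ^ \<gamma> \<noteq> 0" using b by simp
    moreover have "T (s b u) = s (b ^ \<gamma>) (T u)" using assms(3) b unfolding homogeneous_def by simp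
    ultimately show "\<exists>b'. b' \<noteq> 0 \<and> T (s b u) = s b' (T u)" by blast
  qed
qed

lemma part1b:
  fixes s :: "'r::real_normed_field \<Rightarrow> 'w::ab_group_add \<Rightarrow> 'w"
  assumes "setting s T p" "nilpotent_map T" "abs_homogeneous s \<gamma> T"
  shows "(\<forall>c. is_eigenvalue s T c \<longleftrightarrow> c = 0) \<and> (\<forall>x. poly p x = 0 \<longleftrightarrow> x = 0)"
proof -
  note sd = setting_D[OF assms(1)]
  from sd have vs: "vector_space s" by (rule conjunct1)
  from sd have mp: "minimal_poly s p T" by simp
  from sd obtain v :: 'w where v: "v \<noteq> 0" by auto
  show ?thesis
  proof (rule vector_space.nil_all[OF vs mp assms(2) v])
    fix b :: 'r and u assume b: "b \<noteq> 0"
    have "of_real (norm b powr \<gamma>) \<noteq> (0::'r)" using b by simp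
    moreover have "T (s b u) = s (of_real (norm b powr \<gamma>)) (T u)" using assms(3) b unfolding abs_homogeneous_def by simp
    ultimately show "\<exists>b'. b' \<noteq> 0 \<and> T (s b u) = s b' (T u)" by blast
  qed
qed

lemma two_powr_iter:
  fixes s :: "'r::real_normed_field \<Rightarrow> 'w::ab_group_add \<Rightarrow> 'w"
  assumes vs: "vector_space s" and h: "abs_homogeneous s \<gamma> T"
  shows "(T ^^ i) (s (of_real 2) v) = s (of_real (2 powr (\<gamma> ^ i))) ((T ^^ i) v)"
proof (induct i)
  case 0 then show ?case by simp
next
  case (Suc i)
  have ne: "(of_real (2 powr (\<gamma> ^ i)) :: 'r) \<noteq> 0" by simp
  have "(T ^^ Suc i) (s (of_real 2) v) = T (s (of_real (2 powr (\<gamma> ^ i))) ((T ^^ i) v))"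
    using Suc by simp
  also have "\<dots> = s (of_real (norm (of_real (2 powr (\<gamma> ^ i)) :: 'r) powr \<gamma>)) ((T ^^ Suc i) v)"
    using h ne unfolding abs_homogeneous_def by simp
  also have "norm (of_real (2 powr (\<gamma> ^ i)) :: 'r) powr \<gamma> = 2 powr (\<gamma> ^ Suc i)"
    by (simp add: powr_powr mult.commute)
  finally show ?case .
qed

lemma gamma_pow_ne:
  fixes \<gamma> :: real
  assumes "\<gamma> \<ge> 0" "\<gamma> \<notin> {0, 1}" "i < d"
  shows "(2::real) powr (\<gamma> ^ i) \<noteq> 2 powr (\<gamma> ^ d)"
proof -
  have "\<gamma> ^ i \<noteq> \<gamma> ^ d" using assms power_inject_exp'[of \<gamma> i d] by auto
  thus ?thesis using powr_inj[of 2 "\<gamma> ^ i" "\<gamma> ^ d"] by simp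
qed

lemma part2b:
  fixes s :: "'r::real_normed_field \<Rightarrow> 'w::ab_group_add \<Rightarrow> 'w"
  assumes "setting s T p" "\<gamma> \<ge> 0" "\<gamma> \<notin> {0, 1}" "abs_homogeneous s \<gamma> T"
  shows "nilpotent_map T"
proof -
  from setting_D[OF assms(1)] have vs: "vector_space s" and mp: "minimal_poly s p T" by blast+
  show ?thesis
  proof (rule vector_space.nilpotent_from_weights[OF vs mp, of "\<lambda>i. of_real (2 powr (\<gamma> ^ i))" "\<lambda>v. s (of_real 2) v"])
    fix i assume "i < degree p"
    thus "(of_real (2 powr (\<gamma> ^ i)) :: 'r) \<noteq> of_real (2 powr (\<gamma> ^ degree p))"
      using gamma_pow_ne[OF assms(2,3)] by simp
  next
    fix v i show "(T ^^ i) (s (of_real 2) v) = s (of_real (2 powr (\<gamma> ^ i))) ((T ^^ i) v)"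
      by (rule two_powr_iter[OF vs assms(4)])
  qed
qed

lemma part2c:
  fixes s :: "real \<Rightarrow> 'u::ab_group_add \<Rightarrow> 'u"
  assumes "setting s T p" "\<gamma> \<ge> 0" "\<gamma> \<notin> {0, 1}" "pos_homogeneous s \<gamma> T"
  shows "nilpotent_map T"
proof -
  from setting_D[OF assms(1)] have vs: "vector_space s" and mp: "minimal_poly s p T" by blast+
  have it: "(T ^^ i) (s 2 v) = s (2 powr (\<gamma> ^ i)) ((T ^^ i) v)" for i v
  proof (induct i)
    case 0 then show ?case by simp
  next
    case (Suc i)
    have "(T ^^ Suc i) (s 2 v) = T (s (2 powr (\<gamma> ^ i)) ((T ^^ i) v))" using Suc by simp
    also have "\<dots> = s ((2 powr (\<gamma> ^ i)) powr \<gamma>) ((T ^^ Suc i) v)"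
      using assms(4) unfolding pos_homogeneous_def by simp
    also have "(2 powr (\<gamma> ^ i)) powr \<gamma> = 2 powr (\<gamma> ^ Suc i)"
      by (simp add: powr_powr mult.commute)
    finally show ?case .
  qed
  show ?thesis
  proof (rule vector_space.nilpotent_from_weights[OF vs mp, of "\<lambda>i. 2 powr (\<gamma> ^ i)" "\<lambda>v. s 2 v"])
    fix i assume "i < degree p"
    thus "(2::real) powr (\<gamma> ^ i) \<noteq> 2 powr (\<gamma> ^ degree p)"
      using gamma_pow_ne[OF assms(2,3)] by simp
  next
    fix v i show "(T ^^ i) (s 2 v) = s (2 powr (\<gamma> ^ i)) ((T ^^ i) v)" by (rule it)
  qed
qed


lemma part2a:
  fixes s :: "'f::field \<Rightarrow> 'v::ab_group_add \<Rightarrow> 'v"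
  assumes "setting s T p" "infinite (UNIV :: 'f set)" "\<gamma> \<notin> {0, 1}" "homogeneous s \<gamma> T"
  shows "nilpotent_map T"
proof -
  from setting_D[OF assms(1)] have vs: "vector_space s" and mp: "minimal_poly s p T" by blast+
  show ?thesis by (rule vector_space.part2_nat[OF vs mp assms(2-4)])
qed

lemma part3a:
  fixes s :: "'f::field \<Rightarrow> 'v::ab_group_add \<Rightarrow> 'v"
  assumes "setting s T p" "homogeneous s 1 T"
    and F: "infinite (UNIV :: 'f set) \<or> card (UNIV :: 'f set) > 2"
    and ev: "is_eigenvalue s T c"
  shows "poly p c = 0"
proof -
  from setting_D[OF assms(1)] have vs: "vector_space s" and mp: "minimal_poly s p T" by blast+
  have h: "T (s b u) = s b (T u)" if "b \<noteq> 0" for b u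
    using assms(2) that unfolding homogeneous_def by simp
  have "\<not> (UNIV :: 'f set) \<subseteq> {0, 1}"
  proof
    assume sub: "(UNIV :: 'f set) \<subseteq> {0, 1}"
    hence fin: "finite (UNIV :: 'f set)" using finite_subset by blast
    have "card (UNIV :: 'f set) \<le> card {0::'f, 1}" using sub by (intro card_mono) auto
    also have "\<dots> \<le> 2" by (simp add: card_insert_le_m1)
    finally show False using F fin by simp
  qed
  then obtain a :: 'f where a0: "a \<noteq> 0" and a1: "a \<noteq> 1" by blast
  have "s a (T 0) = s 1 (T 0)"
    using h[OF a0, of 0] by (simp add: module.scale_zero_right[OF vs[unfolded module_iff_vector_space[symmetric]]] module.scale_one[OF vs[unfolded module_iff_vector_space[symmetric]]])
  hence T0: "T 0 = 0" using a1 vector_space.scale_cancel_right[OF vs] by blast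
  obtain v where v: "v \<noteq> 0" "T v = s c v" using ev unfolding is_eigenvalue_def by blast
  have it: "(T ^^ i) v = s (c ^ i) v" for i
    by (rule vector_space.eig_iter[OF vs T0 v(2)]) (rule h)
  show ?thesis by (rule vector_space.eig_root[OF vs mp v(1) it])
qed

lemma part3b:
  fixes s :: "'r::real_normed_field \<Rightarrow> 'w::ab_group_add \<Rightarrow> 'w"
  assumes "setting s T p" "abs_homogeneous s 1 T"
  shows "poly p 0 = 0 \<and> (\<forall>c. is_eigenvalue s T c \<longrightarrow> poly p (of_real (norm c)) = 0)"
proof -
  note sd = setting_D[OF assms(1)]
  from sd have vs: "vector_space s" by (rule conjunct1)
  from sd have mp: "minimal_poly s p T" by simp
  from sd obtain v :: 'w where v: "v \<noteq> 0" by auto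
  have h: "T (s b u) = s (of_real (norm b)) (T u)" if "b \<noteq> 0" for b u
    using assms(2) that unfolding abs_homogeneous_def by simp
  have p0: "poly p 0 = 0"
  proof (rule vector_space.const_root[OF vs mp])
    show "v \<noteq> s (-1) v"
    proof
      assume "v = s (-1) v"
      hence "s 1 v = s (-1) v" using module.scale_one[OF vs[unfolded module_iff_vector_space[symmetric]]] by metis
      hence "(1::'r) = -1 \<or> v = 0" using vector_space.scale_cancel_right[OF vs] by blast
      thus False using v by simp
    qed
    show "T v = T (s (-1) v)" using h[of "-1" v] by (simp add: module.scale_one[OF vs[unfolded module_iff_vector_space[symmetric]]])
  qed
  have "T 0 = s 2 (T 0)"
    using h[of 2 0] by (simp add: module.scale_zero_right[OF vs[unfolded module_iff_vector_space[symmetric]]])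
  hence "s 1 (T 0) = s 2 (T 0)" by (simp add: module.scale_one[OF vs[unfolded module_iff_vector_space[symmetric]]])
  hence T0: "T 0 = 0" using vector_space.scale_cancel_right[OF vs] by fastforce
  have "poly p (of_real (norm c)) = 0" if ev: "is_eigenvalue s T c" for c
  proof -
    obtain u where u: "u \<noteq> 0" "T u = s c u" using ev unfolding is_eigenvalue_def by blast
    define r :: 'r where "r = of_real (norm c)"
    obtain w where w: "w \<noteq> 0" "T w = s r w"
    proof (cases "c = 0")
      case True
      then show ?thesis using u that[of u] by (simp add: r_def)
    next
      case False
      have "T (s c u) = s r (s c u)"
        using h[OF False, of u] u(2) by (simp add: r_def)
      moreover have "s c u \<noteq> 0" using False u(1) vector_space.scale_eq_0_iff[OF vs] by blast
      ultimately show ?thesis using that by blast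
    qed
    have it: "(T ^^ i) w = s (r ^ i) w" for i
    proof (rule vector_space.eig_iter[OF vs T0 w(2)])
      fix i assume "r ^ i \<noteq> 0"
      thus "T (s (r ^ i) w) = s (r ^ i) (T w)"
        using h[of "r ^ i" w] by (simp add: r_def norm_power)
    qed
    show ?thesis using vector_space.eig_root[OF vs mp w(1) it] by (simp add: r_def)
  qed
  with p0 show ?thesis by blast
qed


lemma hom0_p0:
  fixes s :: "'f::field \<Rightarrow> 'v::ab_group_add \<Rightarrow> 'v"
  assumes vs: "vector_space s" and mp: "minimal_poly s p T" and v: "v \<noteq> 0" and a: "a \<noteq> 1"
    and h: "T (s a v) = T v"
  shows "poly p 0 = 0"
proof (rule vector_space.const_root[OF vs mp _ h])
  show "s a v \<noteq> v"
  proof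
    assume "s a v = v"
    hence "s a v = s 1 v" by (simp add: module.scale_one[OF vs[unfolded module_iff_vector_space[symmetric]]])
    hence "a = 1 \<or> v = 0" using vector_space.scale_cancel_right[OF vs] by blast
    thus False using a v by blast
  qed
qed

lemma part4a:
  fixes s :: "'f::field \<Rightarrow> 'v::ab_group_add \<Rightarrow> 'v"
  assumes "setting s T p" "homogeneous s 0 T"
  shows "(poly p 1 \<noteq> 0 \<longrightarrow> (\<forall>c. is_eigenvalue s T c \<longrightarrow> c = 0)) \<and>
      (card (UNIV :: 'f set) \<noteq> 2 \<longrightarrow> poly p 0 = 0)"
proof -
  note sd = setting_D[OF assms(1)]
  from sd have vs: "vector_space s" by (rule conjunct1)
  from sd have mp: "minimal_poly s p T" by simp
  from sd obtain v :: 'v where v: "v \<noteq> 0" by auto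
  have h: "T (s b u) = T u" if "b \<noteq> 0" for b u
    using assms(2) that unfolding homogeneous_def
    by (simp add: module.scale_one[OF vs[unfolded module_iff_vector_space[symmetric]]])
  have e: "c = 0" if P: "poly p 1 \<noteq> 0" "is_eigenvalue s T c" for c
  proof (rule ccontr)
    assume c: "c \<noteq> 0"
    obtain u where u: "u \<noteq> 0" "T u = s c u" using P(2) unfolding is_eigenvalue_def by blast
    have "poly p 1 = 0" by (rule vector_space.hom0_eig[OF vs mp c u h[OF c]])
    with P(1) show False by simp
  qed
  have "poly p 0 = 0" if card: "card (UNIV :: 'f set) \<noteq> 2"
  proof -
    have "\<not> (UNIV :: 'f set) \<subseteq> {0, 1}"
    proof
      assume "(UNIV :: 'f set) \<subseteq> {0, 1}"
      hence "(UNIV :: 'f set) = {0, 1}" by blast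
      hence "card (UNIV :: 'f set) = card {0::'f, 1}" by simp
      hence "card (UNIV :: 'f set) = 2" by simp
      with card show False by simp
    qed
    then obtain a :: 'f where a0: "a \<noteq> 0" and a1: "a \<noteq> 1" by blast
    show ?thesis by (rule hom0_p0[OF vs mp v a1 h[OF a0]])
  qed
  with e show ?thesis by blast
qed

lemma part4b:
  fixes s :: "'r::real_normed_field \<Rightarrow> 'w::ab_group_add \<Rightarrow> 'w"
  assumes "setting s T p" "abs_homogeneous s 0 T"
  shows "(poly p 1 \<noteq> 0 \<longrightarrow> (\<forall>c. is_eigenvalue s T c \<longrightarrow> c = 0)) \<and> poly p 0 = 0"
proof -
  note sd = setting_D[OF assms(1)]
  from sd have vs: "vector_space s" by (rule conjunct1)
  from sd have mp: "minimal_poly s p T" by simp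
  from sd obtain v :: 'w where v: "v \<noteq> 0" by auto
  have h: "T (s b u) = T u" if "b \<noteq> 0" for b u
    using assms(2) that unfolding abs_homogeneous_def
    by (simp add: module.scale_one[OF vs[unfolded module_iff_vector_space[symmetric]]])
  have e: "c = 0" if P: "poly p 1 \<noteq> 0" "is_eigenvalue s T c" for c
  proof (rule ccontr)
    assume c: "c \<noteq> 0"
    obtain u where u: "u \<noteq> 0" "T u = s c u" using P(2) unfolding is_eigenvalue_def by blast
    have "poly p 1 = 0" by (rule vector_space.hom0_eig[OF vs mp c u h[OF c]])
    with P(1) show False by simp
  qed
  have "poly p 0 = 0" by (rule hom0_p0[OF vs mp v _ h[of 2]]) simp_all
  with e show ?thesis by blast
qed

lemma part4c:
  fixes s :: "real \<Rightarrow> 'u::ab_group_add \<Rightarrow> 'u"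
  assumes "setting s T p" "pos_homogeneous s 0 T"
  shows "(poly p 1 \<noteq> 0 \<longrightarrow> (\<forall>c. c \<ge> 0 \<and> is_eigenvalue s T c \<longrightarrow> c = 0)) \<and> poly p 0 = 0"
proof -
  note sd = setting_D[OF assms(1)]
  from sd have vs: "vector_space s" by (rule conjunct1)
  from sd have mp: "minimal_poly s p T" by simp
  from sd obtain v :: 'u where v: "v \<noteq> 0" by auto
  have h: "T (s b u) = T u" if "b > 0" for b u
    using assms(2) that unfolding pos_homogeneous_def
    by (simp add: module.scale_one[OF vs[unfolded module_iff_vector_space[symmetric]]])
  have e: "c = 0" if P: "poly p 1 \<noteq> 0" "c \<ge> 0" "is_eigenvalue s T c" for c
  proof (rule ccontr)
    assume c: "c \<noteq> 0"
    hence cp: "c > 0" using P(2) by simp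
    obtain u where u: "u \<noteq> 0" "T u = s c u" using P(3) unfolding is_eigenvalue_def by blast
    have "poly p 1 = 0" by (rule vector_space.hom0_eig[OF vs mp c u h[OF cp]])
    with P(1) show False by simp
  qed
  have "poly p 0 = 0" by (rule hom0_p0[OF vs mp v _ h[of 2]]) simp_all
  with e show ?thesis by blast
qed


theorem mainTheorem18:
  shows
  \<comment> \<open>(1)\<close>
  "(\<forall>(s :: 'f::field \<Rightarrow> 'v::ab_group_add \<Rightarrow> 'v) T p \<gamma>.
      setting s T p \<and> nilpotent_map T \<and> homogeneous s \<gamma> T \<longrightarrow>
      (\<forall>c. is_eigenvalue s T c \<longleftrightarrow> c = 0) \<and> (\<forall>x. poly p x = 0 \<longleftrightarrow> x = 0))
 \<and> (\<forall>(s :: 'r::real_normed_field \<Rightarrow> 'w::ab_group_add \<Rightarrow> 'w) T p \<gamma>.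
      setting s T p \<and> nilpotent_map T \<and> \<gamma> \<ge> 0 \<and> abs_homogeneous s \<gamma> T \<longrightarrow>
      (\<forall>c. is_eigenvalue s T c \<longleftrightarrow> c = 0) \<and> (\<forall>x. poly p x = 0 \<longleftrightarrow> x = 0))
  \<comment> \<open>(2)\<close>
 \<and> (\<forall>(s :: 'f \<Rightarrow> 'v \<Rightarrow> 'v) T p \<gamma>.
      setting s T p \<and> \<not> nilpotent_map T \<and> infinite (UNIV :: 'f set) \<and> \<gamma> \<notin> {0, 1} \<longrightarrow>
      \<not> homogeneous s \<gamma> T)
 \<and> (\<forall>(s :: 'r \<Rightarrow> 'w \<Rightarrow> 'w) T p \<gamma>.
      setting s T p \<and> \<not> nilpotent_map T \<and> \<gamma> \<ge> 0 \<and> \<gamma> \<notin> {0, 1} \<longrightarrow>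
      \<not> abs_homogeneous s \<gamma> T)
 \<and> (\<forall>(s :: real \<Rightarrow> 'u::ab_group_add \<Rightarrow> 'u) T p \<gamma>.
      setting s T p \<and> \<not> nilpotent_map T \<and> \<gamma> \<ge> 0 \<and> \<gamma> \<notin> {0, 1} \<longrightarrow>
      \<not> pos_homogeneous s \<gamma> T)
  \<comment> \<open>(3)\<close>
 \<and> (\<forall>(s :: 'f \<Rightarrow> 'v \<Rightarrow> 'v) T p.
      setting s T p \<and> homogeneous s 1 T \<and> (infinite (UNIV :: 'f set) \<or> card (UNIV :: 'f set) > 2) \<longrightarrow>
      (\<forall>c. is_eigenvalue s T c \<longrightarrow> poly p c = 0))
 \<and> (\<forall>(s :: 'r \<Rightarrow> 'w \<Rightarrow> 'w) T p.
      setting s T p \<and> abs_homogeneous s 1 T \<longrightarrow>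
      poly p 0 = 0 \<and> (\<forall>c. is_eigenvalue s T c \<longrightarrow> poly p (of_real (norm c)) = 0))
  \<comment> \<open>(4)\<close>
 \<and> (\<forall>(s :: 'f \<Rightarrow> 'v \<Rightarrow> 'v) T p.
      setting s T p \<and> homogeneous s 0 T \<longrightarrow>
      (poly p 1 \<noteq> 0 \<longrightarrow> (\<forall>c. is_eigenvalue s T c \<longrightarrow> c = 0)) \<and>
      (card (UNIV :: 'f set) \<noteq> 2 \<longrightarrow> poly p 0 = 0))
 \<and> (\<forall>(s :: 'r \<Rightarrow> 'w \<Rightarrow> 'w) T p.
      setting s T p \<and> abs_homogeneous s 0 T \<longrightarrow>
      (poly p 1 \<noteq> 0 \<longrightarrow> (\<forall>c. is_eigenvalue s T c \<longrightarrow> c = 0)) \<and> poly p 0 = 0)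
 \<and> (\<forall>(s :: real \<Rightarrow> 'u \<Rightarrow> 'u) T p.
      setting s T p \<and> pos_homogeneous s 0 T \<longrightarrow>
      (poly p 1 \<noteq> 0 \<longrightarrow> (\<forall>c. c \<ge> 0 \<and> is_eigenvalue s T c \<longrightarrow> c = 0)) \<and> poly p 0 = 0)"
  apply (intro conjI)
  subgoal using part1a by blast
  subgoal using part1b by blast
  subgoal using part2a by blast
  subgoal using part2b by blast
  subgoal using part2c by blast
  subgoal using part3a by blast
  subgoal using part3b by blast
  subgoal using part4a by blast
  subgoal using part4b by blast
  subgoal using part4c by blast
  done

end
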